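(* Let $n\ge0$ and run the Tiden–Arnborg algorithm on $\sigma(n)$. At no stage does the current system contain an equation of the form $y_{2^j}=^?T\times x_k$ with $j\ge 0$ (i.e., no lateral edge leaves a node $y_{2^j}$).
   Context: Variables are $T$, $x_s$, $y_s$ with $s$ a string over $\{1,2\}$ ($x=x_\varepsilon$, $y=y_\varepsilon$); $2^j$ denotes the string of $j$ twos. For $n\ge0$, $\sigma(n)$ is the system consisting of, for all $0\le i\le n$: $x_{1^i}=^?x_{1^{i+1}}+x_{1^i2}$, $y_{2^i}=^?y_{2^i1}+y_{2^{i+1}}$, $y_{2^i1}=^?T\times x_{1^i2}$, $x=^?T\times y$, $x_{1^{i+1}}=^?x_{1^{i+2}}+x_{1^{i+1}2}$. The algorithm (for the theory $x\times(y+z)=x\times y+x\times z$) repeatedly applies sum transformations to the current system: whenever a variable $U_i$ (with $U\in\{x,y\}$) has both equations $U_i=^?T\times W_j$ and $U_i=^?U_{i1}+U_{i2}$ (such a variable is called a peak), the sum equation $U_i=^?U_{i1}+U_{i2}$ is replaced by $W_j=^?W_{j1}+W_{j2}$, $U_{i1}=^?T\times W_{j1}$, $U_{i2}=^?T\times W_{j2}$ (keeping $U_i=^?T\times W_j$), where the new variables $W_{j1},W_{j2}$ are identified with the existing children of $W_j$ if $W_j$ already has a sum equation $W_j=^?W_{j1}+W_{j2}$. A lateral edge from $u$ to $v$ means the equation $u=^?T\times v$ is present. *)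

theory Defs
  imports Main
begin

datatype dig = D1 | D2

datatype var = T | X "dig list" | Y "dig list"

text \<open>Equations: Sum u v w means u =? v + w;
  Mul u v means u =? T * v (a lateral edge from u to v).\<close>
datatype eqn = Sum var var var | Mul var var

fun child :: "var \<Rightarrow> dig \<Rightarrow> var" where
  "child (X s) d = X (s @ [d])"
| "child (Y s) d = Y (s @ [d])"
| "child T d = T"

definition ones :: "nat \<Rightarrow> dig list" where "ones i = replicate i D1"
definition twos :: "nat \<Rightarrow> dig list" where "twos i = replicate i D2"

definition sigma :: "nat \<Rightarrow> eqn set" where
  "sigma n = (\<Union>i\<in>{0..n}.
     { Sum (X (ones i)) (X (ones (Suc i))) (X (ones i @ [D2])),
       Sum (Y (twos i)) (Y (twos i @ [D1])) (Y (twos (Suc i))),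
       Mul (Y (twos i @ [D1])) (X (ones i @ [D2])),
       Mul (X []) (Y []),
       Sum (X (ones (Suc i))) (X (ones (Suc (Suc i)))) (X (ones (Suc i) @ [D2])) })"

definition sum_step :: "eqn set \<Rightarrow> eqn set \<Rightarrow> bool" where
  "sum_step S S' \<longleftrightarrow>
     (\<exists>u w v1 v2 c1 c2.
        Mul u w \<in> S \<and> Sum u v1 v2 \<in> S \<and>
        (Sum w c1 c2 \<in> S \<or>
         ((\<forall>a b. Sum w a b \<notin> S) \<and> c1 = child w D1 \<and> c2 = child w D2)) \<and>
        S' = (S - {Sum u v1 v2}) \<union> {Sum w c1 c2, Mul v1 c1, Mul v2 c2})"

end

theory Submission
  imports Defs
begin

lemma twos_D1: "s @ [D1] \<noteq> twos j"
  by (induction j arbitrary: s) (auto simp: twos_def Cons_eq_append_conv append_eq_Cons_conv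
        replicate_append_same[symmetric] simp del: replicate_append_same)

lemma twos_snoc_eq: "s @ [D1] = twos j \<longleftrightarrow> False"
  using twos_D1 by blast

lemma twos_D2: "s @ [D2] = twos j \<Longrightarrow> s = twos (j - 1)"
proof -
  assume a: "s @ [D2] = twos j"
  then have "j > 0" by (cases j) (auto simp: twos_def)
  then obtain k where j: "j = Suc k" by (cases j) auto
  have "twos (Suc k) = twos k @ [D2]" by (simp add: twos_def replicate_append_same)
  with a j show ?thesis by simp
qed

lemma twos_Suc: "twos i @ [D2] = twos (Suc i)"
  by (simp add: twos_def replicate_append_same)

lemma ones_ne: "Y (ones i @ [D1]) \<noteq> Y (twos j)" "Y (twos i @ [D1]) \<noteq> Y (twos j)"
  using twos_D1 by auto

definition Inv :: "eqn set \<Rightarrow> bool" where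
  "Inv S \<longleftrightarrow> (\<forall>j w. Mul (Y (twos j)) w \<notin> S) \<and>
     (\<forall>u v1 v2. Sum u v1 v2 \<in> S \<longrightarrow> (\<exists>j. v1 = Y (twos j) \<or> v2 = Y (twos j)) \<longrightarrow> (\<exists>j. u = Y (twos j)))"

lemma Inv_init: "Inv (sigma n)"
  unfolding Inv_def sigma_def
  using twos_D1 twos_Suc by (auto, metis twos_D1)

lemma child_D1: "child w D1 \<noteq> Y (twos j)"
  using twos_D1 by (cases w) auto

lemma child_D2: "child w D2 = Y (twos j) \<Longrightarrow> \<exists>j'. w = Y (twos j')"
  using twos_D2 by (cases w) auto

lemma Inv_step:
  assumes st: "sum_step S S'" and I: "Inv S"
  shows "Inv S'"
proof -
  from st obtain u w v1 v2 c1 c2 where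
    m: "Mul u w \<in> S" and s: "Sum u v1 v2 \<in> S" and
    c: "Sum w c1 c2 \<in> S \<or> ((\<forall>a b. Sum w a b \<notin> S) \<and> c1 = child w D1 \<and> c2 = child w D2)" and
    S': "S' = (S - {Sum u v1 v2}) \<union> {Sum w c1 c2, Mul v1 c1, Mul v2 c2}"
    unfolding sum_step_def by blast
  have nu: "\<forall>j. u \<noteq> Y (twos j)" using I m unfolding Inv_def by blast
  have nv: "\<forall>j. v1 \<noteq> Y (twos j) \<and> v2 \<noteq> Y (twos j)"
    using I s nu unfolding Inv_def by blast
  have sw: "(\<exists>j. c1 = Y (twos j) \<or> c2 = Y (twos j)) \<longrightarrow> (\<exists>j. w = Y (twos j))"
    using c
  proof
    assume "Sum w c1 c2 \<in> S" then show ?thesis using I unfolding Inv_def by blast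
  next
    assume "(\<forall>a b. Sum w a b \<notin> S) \<and> c1 = child w D1 \<and> c2 = child w D2"
    then show ?thesis using child_D1 child_D2 by metis
  qed
  show ?thesis
    unfolding Inv_def S'
  proof (intro conjI allI impI)
    fix j w' show "Mul (Y (twos j)) w' \<notin> S - {Sum u v1 v2} \<union> {Sum w c1 c2, Mul v1 c1, Mul v2 c2}"
      using I nv unfolding Inv_def by auto
  next
    fix a b d assume "Sum a b d \<in> S - {Sum u v1 v2} \<union> {Sum w c1 c2, Mul v1 c1, Mul v2 c2}"
      and "\<exists>j. b = Y (twos j) \<or> d = Y (twos j)"
    then have h: "Sum a b d \<in> S \<or> (a = w \<and> b = c1 \<and> d = c2)" and e: "\<exists>j. b = Y (twos j) \<or> d = Y (twos j)" by auto
    from h show "\<exists>j. a = Y (twos j)"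
    proof
      assume "Sum a b d \<in> S" then show ?thesis using I e unfolding Inv_def by blast
    next
      assume "a = w \<and> b = c1 \<and> d = c2" then show ?thesis using sw e by blast
    qed
  qed
qed

theorem lemma2:
  fixes n :: nat
  assumes "sum_step\<^sup>*\<^sup>* (sigma n) S"
  shows "\<forall>j k. Mul (Y (twos j)) (X k) \<notin> S"
proof -
  have "Inv S" using assms
    by (induction rule: rtranclp_induct) (auto simp: Inv_init intro: Inv_step)
  then show ?thesis unfolding Inv_def by blast
qed

end
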